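(* Let $\Pi$ be a consistent generalized annotated program, either an LGAP or a UGAP, over a finite annotation semi-lattice $\mathcal{T}$. Then $\mathit{lfp}(\mathbf{T}_\Pi)=\mathbf{T}_\Pi\uparrow x$, where $x=\mathit{height}(\mathcal{T})\cdot|\mathcal{L}|$ and $\mathcal{L}$ is the set of all ground literals.
   Context: Setting: a first-order language with finitely many constants, finitely many predicate symbols of arity 1 or 2, and no function symbols; $\mathcal{L}$ is the (finite) set of ground literals (ground atoms $a$ and their negations $\neg a$). Annotations come from a finite semi-lattice $(\mathcal{T},\sqsubseteq)$ with finitely many discrete elements: for a UGAP, $\mathcal{T}$ is an upper semi-lattice (greatest element $\top$) and interpretations map ground atoms to $\mathcal{T}$; for an LGAP, $\mathcal{T}$ is a lower semi-lattice with least element $\bot$ and possibly several maximal elements, equipped with a unary function $\neg$ (in the paper's instantiation: closed intervals $[l,u]\subseteq[0,1]$, $\bot=[0,1]$, maximal elements $[x,x]$, $\neg[l,u]=[1-u,1-l]$), and interpretations map ground literals to $\mathcal{T}$ with $I(a)=\neg(I(\neg a))$. $\mathit{height}(\mathcal{T})$ is the maximum number of elements on a path in $\mathcal{T}$ between the bottom element and a top (maximal) element, both endpoints included. A rule is $\ell_0:\mu_0\leftarrow\ell_1:\mu_1\wedge\cdots\wedge\ell_m:\mu_m$ with annotated literals (annotations being lattice elements, lattice variables, or function terms over $\mathcal{T}$); a program is a finite set of rules. $I\models\ell:\mu$ iff $\mu\sqsubseteq I(\ell)$; a ground rule is satisfied iff its head is satisfied or some body element is not; $\Pi$ is consistent iff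 some interpretation satisfies all ground instances of its rules. $\mathbf{T}_\Pi(I)(\ell_0)=\sup\big(\{I(\ell_0)\}\cup\{\mu_0 : \ell_0:\mu_0\leftarrow\ell_1:\mu_1\wedge\cdots\wedge\ell_m:\mu_m\text{ a ground instance of a rule in }\Pi,\ I\models\ell_i:\mu_i\ \forall i\}\big)$. Iteration: $\mathbf{T}_\Pi\uparrow 0$ assigns the bottom element $\bot$ to every ground literal, and $\mathbf{T}_\Pi\uparrow(i+1)=\mathbf{T}_\Pi(\mathbf{T}_\Pi\uparrow i)$. $\mathit{lfp}(\mathbf{T}_\Pi)$ is the least fixpoint of $\mathbf{T}_\Pi$. *)

theory Defs
  imports Main
begin

datatype 'a lit = Pos 'a | Neg 'a

text \<open>A ground annotated rule  l0:mu0 <- l1:mu1 /\ ... /\ lm:mum.\<close>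
datatype ('a, 't) grule = Rule "'a lit" 't "('a lit \<times> 't) list"

definition is_lub :: "'t::order set \<Rightarrow> 't \<Rightarrow> bool" where
  "is_lub S u \<longleftrightarrow> (\<forall>x\<in>S. x \<le> u) \<and> (\<forall>v. (\<forall>x\<in>S. x \<le> v) \<longrightarrow> u \<le> v)"

definition is_glb :: "'t::order set \<Rightarrow> 't \<Rightarrow> bool" where
  "is_glb S g \<longleftrightarrow> (\<forall>x\<in>S. g \<le> x) \<and> (\<forall>v. (\<forall>x\<in>S. v \<le> x) \<longrightarrow> v \<le> g)"

definition sat_ann :: "('a lit \<Rightarrow> 't::order) \<Rightarrow> 'a lit \<times> 't \<Rightarrow> bool" where
  "sat_ann I lm \<longleftrightarrow> snd lm \<le> I (fst lm)"

fun rule_sat :: "('a lit \<Rightarrow> 't::order) \<Rightarrow> ('a, 't) grule \<Rightarrow> bool" where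
  "rule_sat I (Rule l m body) \<longleftrightarrow> sat_ann I (l, m) \<or> \<not> (\<forall>b\<in>set body. sat_ann I b)"

fun rule_lits :: "('a, 't) grule \<Rightarrow> 'a lit set" where
  "rule_lits (Rule l m body) = insert l (fst ` set body)"

text \<open>The set whose supremum defines T_Pi(I)(l); R is the set of ground instances of Pi.\<close>
definition T_set :: "('a, 't::order) grule set \<Rightarrow> ('a lit \<Rightarrow> 't) \<Rightarrow> 'a lit \<Rightarrow> 't set" where
  "T_set R I l = insert (I l) {m. \<exists>body. Rule l m body \<in> R \<and> (\<forall>b\<in>set body. sat_ann I b)}"

definition T_op :: "('a, 't::order) grule set \<Rightarrow> ('a lit \<Rightarrow> 't) \<Rightarrow> 'a lit \<Rightarrow> 't" where
  "T_op R I l = (THE u. is_lub (T_set R I l) u)"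

definition T_defined :: "('a, 't::order) grule set \<Rightarrow> ('a lit \<Rightarrow> 't) \<Rightarrow> bool" where
  "T_defined R I \<longleftrightarrow> (\<forall>l. \<exists>u. is_lub (T_set R I l) u)"

definition T_up :: "('a, 't::order_bot) grule set \<Rightarrow> nat \<Rightarrow> 'a lit \<Rightarrow> 't" where
  "T_up R n = (T_op R ^^ n) (\<lambda>_. bot)"

definition is_fixpoint :: "('a, 't::order) grule set \<Rightarrow> ('a lit \<Rightarrow> 't) \<Rightarrow> bool" where
  "is_fixpoint R I \<longleftrightarrow> T_defined R I \<and> T_op R I = I"

definition T_lfp :: "('a, 't::order) grule set \<Rightarrow> 'a lit \<Rightarrow> 't" where
  "T_lfp R = (THE J. is_fixpoint R J \<and> (\<forall>K. is_fixpoint R K \<longrightarrow> (\<forall>l. J l \<le> K l)))"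

definition height :: "'t::order_bot itself \<Rightarrow> nat" where
  "height _ = Max {length xs | xs :: 't list. xs \<noteq> [] \<and> sorted_wrt (<) xs \<and> hd xs = bot
                     \<and> (\<forall>y. \<not> last xs < y)}"

definition ugap :: "('a, 't::order) grule set \<Rightarrow> bool" where
  "ugap R \<longleftrightarrow> (\<forall>x y::'t. \<exists>u. is_lub {x, y} u) \<and> (\<exists>t::'t. \<forall>x. x \<le> t)
             \<and> (\<forall>r\<in>R. \<forall>l\<in>rule_lits r. \<exists>a. l = Pos a)"

definition ugap_consistent :: "('a, 't::order) grule set \<Rightarrow> bool" where
  "ugap_consistent R \<longleftrightarrow> (\<exists>I. \<forall>r\<in>R. rule_sat I r)"

definition lgap :: "('a, 't::order) grule set \<Rightarrow> bool" where
  "lgap R \<longleftrightarrow> (\<forall>x y::'t. \<exists>g. is_glb {x, y} g)"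

definition lgap_interp :: "('t \<Rightarrow> 't) \<Rightarrow> ('a lit \<Rightarrow> 't) \<Rightarrow> bool" where
  "lgap_interp neg I \<longleftrightarrow> (\<forall>a. I (Pos a) = neg (I (Neg a)))"

definition lgap_consistent :: "('t \<Rightarrow> 't) \<Rightarrow> ('a, 't::order) grule set \<Rightarrow> bool" where
  "lgap_consistent neg R \<longleftrightarrow> (\<exists>I. lgap_interp neg I \<and> (\<forall>r\<in>R. rule_sat I r))"

end

theory Submission
  imports Defs
begin

section \<open>Chains and ranks\<close>

lemma swlt_distinct: "sorted_wrt (<) (xs::'t::order list) \<Longrightarrow> distinct xs"
  by (induction xs) auto

lemma swlt_le_last: "sorted_wrt (<) (xs::'t::order list) \<Longrightarrow> x \<in> set xs \<Longrightarrow> x \<le> last xs"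
proof (induction xs)
  case Nil then show ?case by simp
next
  case (Cons a xs)
  show ?case
  proof (cases "xs = []")
    case True then show ?thesis using Cons by simp
  next
    case False
    then have "last xs \<in> set xs" by simp
    then show ?thesis using Cons False by (auto intro: less_imp_le)
  qed
qed

lemma swlt_len: "sorted_wrt (<) (xs::'t::{finite,order} list) \<Longrightarrow> length xs \<le> card (UNIV::'t set)"
  using swlt_distinct distinct_card card_mono[of "UNIV::'t set" "set xs"]
  by (metis finite subset_UNIV)

definition chains_to :: "'t::order_bot \<Rightarrow> 't list set" where
  "chains_to t = {xs. xs \<noteq> [] \<and> sorted_wrt (<) xs \<and> hd xs = bot \<and> last xs = t}"

definition rk :: "'t::{order_bot,finite} \<Rightarrow> nat" where
  "rk t = Max (length ` chains_to t)"

lemma chains_to_ne: "chains_to t \<noteq> {}"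
proof (cases "t = bot")
  case True then have "[bot] \<in> chains_to t" by (simp add: chains_to_def)
  then show ?thesis by blast
next
  case False then have "[bot, t] \<in> chains_to t" by (simp add: chains_to_def bot_less)
  then show ?thesis by blast
qed

lemma fin_len: "finite (length ` {xs::'t::{order,finite} list. sorted_wrt (<) xs \<and> P xs})"
  by (rule finite_subset[of _ "{..card (UNIV::'t set)}"]) (auto simp: swlt_len)

lemma fin_chains: "finite (length ` chains_to (t::'t::{order_bot,finite}))"
  using fin_len[of "\<lambda>xs. xs \<noteq> [] \<and> hd xs = bot \<and> last xs = t"]
  by (simp add: chains_to_def conj_ac)

lemma rk_in: "\<exists>xs\<in>chains_to t. length xs = rk t"
proof -
  have "Max (length ` chains_to t) \<in> length ` chains_to t"
    using fin_chains[of t] chains_to_ne[of t] by (intro Max_in) auto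
  then show ?thesis unfolding rk_def by auto
qed

lemma rk_ge: "xs \<in> chains_to t \<Longrightarrow> length xs \<le> rk t"
  unfolding rk_def using fin_chains by (rule Max_ge) simp

lemma rk_pos: "1 \<le> rk t"
proof -
  obtain xs where "xs \<in> chains_to t" "length xs = rk t" using rk_in by blast
  then show ?thesis by (cases xs) (auto simp: chains_to_def)
qed

lemma rk_less: assumes "s < t" shows "rk s < rk t"
proof -
  obtain xs where xs: "xs \<in> chains_to s" "length xs = rk s" using rk_in by blast
  have "xs @ [t] \<in> chains_to t"
    using xs(1) assms swlt_le_last[of xs]
    by (auto simp: chains_to_def sorted_wrt_append intro: le_less_trans)
  from rk_ge[OF this] xs show ?thesis by simp
qed

lemma rk_le_height: "rk (t::'t::{order_bot,finite}) \<le> height TYPE('t)"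
proof -
  define H where "H = {length xs | xs :: 't list. xs \<noteq> [] \<and> sorted_wrt (<) xs \<and> hd xs = bot
                     \<and> (\<forall>y. \<not> last xs < y)}"
  have finH: "finite H"
    using fin_len[of "\<lambda>xs. xs \<noteq> [] \<and> hd xs = bot \<and> (\<forall>y. \<not> last xs < y)"]
    unfolding H_def by (simp add: image_def conj_ac)
  obtain xs where xs: "xs \<in> chains_to t" "length xs = rk t" using rk_in by blast
  obtain m where m: "t \<le> m" "\<forall>b. m \<le> b \<longrightarrow> m = b"
    using finite_has_maximal2[of "UNIV::'t set" t] by auto
  have mm: "\<forall>y. \<not> m < y" using m(2) by (auto simp: less_le)
  have "rk t \<in> H \<or> rk t + 1 \<in> H"
  proof (cases "t = m")
    case True
    then have "length xs \<in> H" using xs mm unfolding H_def chains_to_def by blast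
    then show ?thesis using xs by simp
  next
    case False
    then have tm: "t < m" using m(1) by simp
    have "xs @ [m] \<noteq> [] \<and> sorted_wrt (<) (xs @ [m]) \<and> hd (xs @ [m]) = bot \<and> (\<forall>y. \<not> last (xs @ [m]) < y)"
      using xs(1) tm mm swlt_le_last[of xs]
      by (auto simp: chains_to_def sorted_wrt_append intro: le_less_trans)
    then have "length (xs @ [m]) \<in> H" unfolding H_def by blast
    then show ?thesis using xs by simp
  qed
  then have "rk t \<le> Max H" using finH Max_ge[OF finH] by (meson add_leE)
  then show ?thesis unfolding height_def H_def .
qed


section \<open>Lubs and the operator\<close>

lemma lub_unique: "is_lub S (u::'t::order) \<Longrightarrow> is_lub S v \<Longrightarrow> u = v"
  unfolding is_lub_def by (simp add: order_antisym)

lemma T_op_lub: "T_defined R I \<Longrightarrow> is_lub (T_set R I l) (T_op R I l)"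
  unfolding T_defined_def T_op_def by (metis lub_unique theI)

lemma sat_mono: "sat_ann I b \<Longrightarrow> (\<forall>l. I l \<le> J l) \<Longrightarrow> sat_ann J b"
  unfolding sat_ann_def by (meson order_trans)

lemma T_op_mono:
  assumes "\<forall>l. I l \<le> J l" "T_defined R I" "T_defined R J"
  shows "T_op R I l \<le> T_op R J l"
proof -
  have ub: "\<forall>x\<in>T_set R J l. x \<le> T_op R J l" using T_op_lub[OF assms(3)] unfolding is_lub_def by blast
  have "\<forall>x\<in>T_set R I l. x \<le> T_op R J l"
  proof
    fix x assume "x \<in> T_set R I l"
    then consider "x = I l" | body where "Rule l x body \<in> R" "\<forall>b\<in>set body. sat_ann I b"
      unfolding T_set_def by blast
    then show "x \<le> T_op R J l"
    proof cases
      case 1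
      then have "J l \<in> T_set R J l" unfolding T_set_def by simp
      then show ?thesis using 1 assms(1) ub by (meson order_trans)
    next
      case 2
      then have "x \<in> T_set R J l" unfolding T_set_def using sat_mono assms(1) by blast
      then show ?thesis using ub by blast
    qed
  qed
  then show ?thesis using T_op_lub[OF assms(2)] unfolding is_lub_def by blast
qed

lemma T_op_ext: "T_defined R I \<Longrightarrow> I l \<le> T_op R I l"
  using T_op_lub[of R I l] unfolding is_lub_def T_set_def by blast

lemma bounded_step:
  assumes A: "\<forall>S::'t::order set. (\<exists>b. \<forall>x\<in>S. x \<le> b) \<longrightarrow> (\<exists>u. is_lub S u)"
    and C: "\<forall>r\<in>R. rule_sat C r"
    and I: "\<forall>l. I l \<le> (C l :: 't)"
  shows "T_defined R I \<and> (\<forall>l. T_op R I l \<le> C l)"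
proof -
  have ub: "\<forall>x\<in>T_set R I l. x \<le> C l" for l
  proof
    fix x assume "x \<in> T_set R I l"
    then consider "x = I l" | body where "Rule l x body \<in> R" "\<forall>b\<in>set body. sat_ann I b"
      unfolding T_set_def by blast
    then show "x \<le> C l"
    proof cases
      case 1 then show ?thesis using I by simp
    next
      case 2
      then have "\<forall>b\<in>set body. sat_ann C b" using sat_mono I by blast
      then show ?thesis using C 2(1) by (force simp: sat_ann_def)
    qed
  qed
  then have D: "T_defined R I" unfolding T_defined_def using A by blast
  moreover have "T_op R I l \<le> C l" for l
    using T_op_lub[OF D, of l] ub[of l] unfolding is_lub_def by blast
  ultimately show ?thesis by blast
qed

lemma ugap_lub:
  assumes "\<forall>x y::'t::order_bot. \<exists>u. is_lub {x, y} u" "finite (S::'t set)"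
  shows "\<exists>u. is_lub S u"
  using assms(2)
proof (induction S rule: finite_induct)
  case empty
  have "is_lub {} (bot::'t)" unfolding is_lub_def by simp
  then show ?case by blast
next
  case (insert x F)
  then obtain u where u: "is_lub F u" by blast
  obtain v where v: "is_lub {x, u} v" using assms(1) by blast
  have "is_lub (insert x F) v" unfolding is_lub_def
  proof (intro conjI allI impI ballI)
    fix y assume "y \<in> insert x F"
    then show "y \<le> v" using u v unfolding is_lub_def by (auto intro: order_trans)
  next
    fix w assume w: "\<forall>y\<in>insert x F. y \<le> w"
    then have "u \<le> w" using u unfolding is_lub_def by auto
    then show "v \<le> w" using v w unfolding is_lub_def by auto
  qed
  then show ?case by blast
qed

lemma lgap_glb:
  assumes "\<forall>x y::'t::order. \<exists>g. is_glb {x, y} g" "finite (S::'t set)" "S \<noteq> {}"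
  shows "\<exists>g. is_glb S g"
  using assms(2,3)
proof (induction S rule: finite_ne_induct)
  case (singleton x)
  have "is_glb {x} x" unfolding is_glb_def by simp
  then show ?case by blast
next
  case (insert x F)
  then obtain u where u: "is_glb F u" by blast
  obtain v where v: "is_glb {x, u} v" using assms(1) by blast
  have "is_glb (insert x F) v" unfolding is_glb_def
  proof (intro conjI allI impI ballI)
    fix y assume "y \<in> insert x F"
    then show "v \<le> y" using u v unfolding is_glb_def by (auto intro: order_trans)
  next
    fix w assume w: "\<forall>y\<in>insert x F. w \<le> y"
    then have "w \<le> u" using u unfolding is_glb_def by auto
    then show "w \<le> v" using v w unfolding is_glb_def by auto
  qed
  then show ?case by blast
qed

lemma lgap_lub:
  assumes "\<forall>x y::'t::{order,finite}. \<exists>g. is_glb {x, y} g" "\<forall>x\<in>S. x \<le> b"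
  shows "\<exists>u. is_lub (S::'t set) u"
proof -
  define U where "U = {v. \<forall>x\<in>S. x \<le> v}"
  have "b \<in> U" using assms(2) U_def by blast
  then obtain g where g: "is_glb U g" using lgap_glb[OF assms(1), of U] by auto
  have "is_lub S g" unfolding is_lub_def
  proof
    show "\<forall>x\<in>S. x \<le> g" using g unfolding is_glb_def U_def by blast
    show "\<forall>v. (\<forall>x\<in>S. x \<le> v) \<longrightarrow> g \<le> v" using g unfolding is_glb_def U_def by blast
  qed
  then show ?thesis by blast
qed


lemma fin_lit: "finite (UNIV :: ('a::finite) lit set)"
proof -
  have "(UNIV :: 'a lit set) = range Pos \<union> range Neg"
    by (auto, metis lit.exhaust rangeI)
  moreover have "finite (range Pos \<union> range (Neg :: 'a \<Rightarrow> 'a lit))" by simp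
  ultimately show ?thesis by metis
qed

lemma card_lit: "1 \<le> card (UNIV :: ('a::finite) lit set)"
  using fin_lit[where 'a='a] by (simp add: Suc_le_eq card_gt_0_iff)

lemma T_up_0: "T_up R 0 = (\<lambda>_. bot)" by (simp add: T_up_def)
lemma T_up_Suc: "T_up R (Suc n) = T_op R (T_up R n)" by (simp add: T_up_def)

lemma stat:
  assumes "T_up R (Suc k) = T_up R k" shows "T_up R (k + j) = T_up R k"
  by (induction j) (use assms in \<open>simp_all add: T_up_Suc\<close>)

lemma rk_mono: "s \<le> t \<Longrightarrow> rk s \<le> rk t"
  using rk_less[of s t] by (cases "s = t") (auto simp: order_less_le)

lemma main_gen:
  fixes R :: "('a::finite, 't::{order_bot, finite}) grule set"
  assumes A: "\<forall>S::'t set. (\<exists>b. \<forall>x\<in>S. x \<le> b) \<longrightarrow> (\<exists>u. is_lub S u)"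
    and C: "\<forall>r\<in>R. rule_sat C r"
  shows "T_lfp R = T_up R (height TYPE('t) * card (UNIV :: 'a lit set))"
proof -
  let ?L = "UNIV :: 'a lit set"
  let ?N = "height TYPE('t) * card ?L"
  have props: "(\<forall>l. T_up R n l \<le> C l) \<and> T_defined R (T_up R n)" for n
  proof (induction n)
    case 0
    then show ?case using bounded_step[OF A C, of "T_up R 0"] by (simp add: T_up_0)
  next
    case (Suc n)
    then show ?case using bounded_step[OF A C, of "T_up R (Suc n)"]
      bounded_step[OF A C, of "T_up R n"] by (simp add: T_up_Suc)
  qed
  have incr: "T_up R n l \<le> T_up R (Suc n) l" for n l
    using T_op_ext[OF props[of n, THEN conjunct2]] by (simp add: T_up_Suc)
  define pot where "pot n = (\<Sum>l\<in>?L. rk (T_up R n l))" for n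
  have pot_lb: "(\<forall>k<n. T_up R (Suc k) \<noteq> T_up R k) \<Longrightarrow> card ?L + n \<le> pot n" for n
  proof (induction n)
    case 0
    have "(\<Sum>l\<in>?L. 1) \<le> pot 0" unfolding pot_def
      by (intro sum_mono) (use rk_pos in auto)
    then show ?case by simp
  next
    case (Suc n)
    then have IH: "card ?L + n \<le> pot n" by simp
    from Suc.prems have "T_up R (Suc n) \<noteq> T_up R n" by simp
    then obtain a where a: "T_up R (Suc n) a \<noteq> T_up R n a" by blast
    have "pot n < pot (Suc n)" unfolding pot_def
    proof (rule sum_strict_mono_ex1[OF fin_lit])
      show "\<forall>x\<in>?L. rk (T_up R n x) \<le> rk (T_up R (Suc n) x)" using incr rk_mono by blast
      show "\<exists>x\<in>?L. rk (T_up R n x) < rk (T_up R (Suc n) x)"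
        using a incr[of n a] rk_less by (metis UNIV_I order_less_le)
    qed
    then show ?case using IH by simp
  qed
  have pot_ub: "pot n \<le> card ?L * height TYPE('t)" for n
    unfolding pot_def using sum_bounded_above[of ?L "\<lambda>l. rk (T_up R n l)" "height TYPE('t)"]
      rk_le_height[where 't='t] by simp
  obtain k where k: "k < ?N" "T_up R (Suc k) = T_up R k"
  proof (rule ccontr)
    assume "\<not> thesis"
    then have "\<forall>k<?N. T_up R (Suc k) \<noteq> T_up R k" using that by blast
    then have "card ?L + ?N \<le> pot ?N" by (rule pot_lb)
    then show False using pot_ub[of ?N] card_lit[where 'a='a] by (simp add: mult.commute)
  qed
  have eqN: "T_up R ?N = T_up R k" using stat[OF k(2), of "?N - k"] k(1) by simp
  have fixp: "is_fixpoint R (T_up R ?N)"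
    unfolding is_fixpoint_def using props[of ?N] eqN k(2) by (simp add: T_up_Suc)
  have least: "\<forall>l. T_up R n l \<le> K l" if K: "is_fixpoint R K" for K n
  proof (induction n)
    case 0 then show ?case by (simp add: T_up_0)
  next
    case (Suc n)
    have "T_op R (T_up R n) l \<le> T_op R K l" for l
      using T_op_mono[OF Suc props[of n, THEN conjunct2]] K unfolding is_fixpoint_def by blast
    then show ?case using K unfolding is_fixpoint_def by (simp add: T_up_Suc)
  qed
  show ?thesis unfolding T_lfp_def
  proof (rule the_equality)
    show "is_fixpoint R (T_up R ?N) \<and> (\<forall>K. is_fixpoint R K \<longrightarrow> (\<forall>l. T_up R ?N l \<le> K l))"
      using fixp least by blast
  next
    fix J assume J: "is_fixpoint R J \<and> (\<forall>K. is_fixpoint R K \<longrightarrow> (\<forall>l. J l \<le> K l))"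
    have "\<forall>l. J l \<le> T_up R ?N l" using J fixp by blast
    moreover have "\<forall>l. T_up R ?N l \<le> J l" using least J by blast
    ultimately show "J = T_up R ?N" by (intro ext) (simp add: order_antisym)
  qed
qed

theorem theorem4p3:
  fixes R :: "('a::finite, 't::{order_bot, finite}) grule set"
    and neg :: "'t \<Rightarrow> 't"
  assumes "finite R"
    and "(ugap R \<and> ugap_consistent R) \<or> (lgap R \<and> lgap_consistent neg R)"
  shows "T_lfp R = T_up R (height TYPE('t) * card (UNIV :: 'a lit set))"
  using assms(2)
proof
  assume u: "ugap R \<and> ugap_consistent R"
  then obtain t :: 't where t: "\<forall>x. x \<le> t" unfolding ugap_def by blast
  have A: "\<forall>S::'t set. (\<exists>b. \<forall>x\<in>S. x \<le> b) \<longrightarrow> (\<exists>u. is_lub S u)"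
    using u ugap_lub unfolding ugap_def by (metis finite)
  have C: "\<forall>r\<in>R. rule_sat (\<lambda>_. t) r"
  proof
    fix r show "rule_sat (\<lambda>_. t) r" by (cases r) (simp add: sat_ann_def t)
  qed
  show ?thesis by (rule main_gen[OF A C])
next
  assume l: "lgap R \<and> lgap_consistent neg R"
  then obtain I where C: "\<forall>r\<in>R. rule_sat I r" unfolding lgap_consistent_def by blast
  have A: "\<forall>S::'t set. (\<exists>b. \<forall>x\<in>S. x \<le> b) \<longrightarrow> (\<exists>u. is_lub S u)"
    using l lgap_lub unfolding lgap_def by metis
  show ?thesis by (rule main_gen[OF A C])
qed

end
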